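(* Let $D$ be a CAEXT derivation ending in a configuration $C\neq\mathsf{unsat}$. Then in $C$, for all array terms $a$ and constant array terms $\langle v\rangle$: if $\pi(a,\langle v\rangle)\neq()$, then the formula $$\mathcal R(a,\langle v\rangle)\Rightarrow \forall i{:}\sigma.\ \Big(\bigvee_{k\in I(a,\langle v\rangle)} i\approx k\Big)\vee a[i]\approx v$$ is valid in the theory of extensional constant arrays.
   Context: Theory. Many-sorted first-order logic with equality. There is an index sort $\sigma$, an element sort $\tau$, and an array sort $(\sigma\to\tau)$, with function symbols: read $a[i]$, write $a\langle i\triangleleft u\rangle$, and constant array $\langle v\rangle$. The theory of extensional constant arrays consists of all interpretations satisfying: (row-eq) $\forall a,i,j,u.\ i\approx j\Rightarrow a\langle i\triangleleft u\rangle[j]\approx u$; (row-ne) $\forall a,i,j,u.\ i\not\approx j\Rightarrow a\langle i\triangleleft u\rangle[j]\approx a[j]$; (ext) $\forall a,b.\ a\approx b\Leftrightarrow \forall i.\ a[i]\approx b[i]$; (roc) $\forall i,v.\ \langle v\rangle[i]\approx v$. The empty theory treats all these symbols (and the array sort) as uninterpreted. $T(A)$ is the set of terms occurring in $A$, $T_{\mathcal A}(A)$ the set of array terms in $A$, and $W(A)=\{a\langle i\triangleleft u\rangle[i]\approx u \mid a\langle i\triangleleft u\rangle\in T(A)\}$. Configurations. A configuration is either $\mathsf{unsat}$ or a triple $\langle A,\mathcal I,\pi\rangle$ where $A$ is a set of formulas (with flat literals), $\mathcal I$ is either $\mathcal I_0=\mathsf{none}$ or an interpretation in the empty theory satisfying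 $A$, and $\pi$ maps pairs $(a,t)$ ($a$ an array term, $t$ a read term $b[i]$ or a constant array term $\langle v\rangle$) to either the undefined value $()$ or a pair $(r,c)$ with $r$ a formula and $c$ an array term. $\pi_0$ maps every pair to $()$; the initial configuration for $A$ is $\langle A,\mathcal I_0,\pi_0\rangle$. Reasons. $\mathcal R(a,t)=()$ if $\pi(a,t)=()$; otherwise $\mathcal R(a,t)=\top$ if $t=a$ or $t=a[i]$ for some $i$; otherwise $\mathcal R(a,t)=\mathcal R(c,t)\wedge r$ where $\pi(a,t)=(r,c)$. Updated indices $I(a,\langle v\rangle)$: $()$ if $\pi(a,\langle v\rangle)=()$; $\emptyset$ if $a=\langle v\rangle$; $I(b,\langle v\rangle)\cup\{j\}$ if $\pi(a,\langle v\rangle)=(\top,b)$ with $b=a\langle j\triangleleft u\rangle$ or $a=b\langle j\triangleleft u\rangle$; otherwise $I(c,\langle v\rangle)$ where $\pi(a,\langle v\rangle)=(r,c)$. "$\mathcal I\models\varphi$" refers to the current $\mathcal I$ (empty theory); such premises require $\mathcal I\ne\mathcal I_0$. "Reset" means $(\mathcal I,\pi):=(\mathcal I_0,\pi_0)$. Rules of CAEXT: Interp: if $\mathcal I=\mathcal I_0$ and $\mathcal I'\models A\cup W(A)$ in the empty theory, set $\mathcal I:=\mathcal I'$. Conf: if $A\cup W(A)$ is empty-theory unsatisfiable, derive $\mathsf{unsat}$. InitR: $a[i]\in T(A)$ ⟹ $\pi(a,a[i]):=(\top,a)$. InitW: $s=a\langle i\triangleleft u\rangle\in T(A)$ ⟹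 $\pi(s,s[i]):=(\top,s)$. RowD: $\mathcal I\models i\not\approx j$, $\pi(a\langle j\triangleleft u\rangle,b[i])\ne()$, $\pi(a,b[i])=()$ ⟹ $\pi(a,b[i]):=(i\not\approx j,a\langle j\triangleleft u\rangle)$. RowU: $\mathcal I\models i\not\approx j$, $a\langle j\triangleleft u\rangle\in T(A)$, $\pi(a,b[i])\ne()$, $\pi(a\langle j\triangleleft u\rangle,b[i])=()$ ⟹ $\pi(a\langle j\triangleleft u\rangle,b[i]):=(i\not\approx j,a)$. EqR: $\mathcal I\models a\approx c$, $a,c\in T_{\mathcal A}(A)$, $a\approx c\in T(A)$, $\pi(a,b[i])\ne()$, $\pi(c,b[i])=()$ ⟹ $\pi(c,b[i]):=(a\approx c,a)$. EqL: symmetric, $\pi(a,b[i]):=(a\approx c,c)$. CongR: $\mathcal I\models i\approx k$, $\pi(a,b[i])\ne()$, $\pi(a,c[k])\ne()$, $\mathcal I\models b[i]\not\approx c[k]$ ⟹ add $\mathcal R(a,b[i])\wedge\mathcal R(a,c[k])\wedge i\approx k\Rightarrow b[i]\approx c[k]$ to $A$, reset. DisEq: $\mathcal I\models a\not\approx c$, $a,c\in T_{\mathcal A}(A)$, $a\approx c\in T(A)$, $k_{\{a,c\}}\notin T(A)$ ⟹ add $a\not\approx c\Rightarrow a[k_{\{a,c\}}]\not\approx c[k_{\{a,c\}}]$ (fresh index constant $k_{\{a,c\}}$), reset. Roc: $\pi(\langle v\rangle,b[i])\ne()$, $\mathcal I\models b[i]\not\approx v$ ⟹ add $\mathcal R(\langle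 v\rangle,b[i])\Rightarrow b[i]\approx v$, reset. InitC: $\langle v\rangle\in T(A)$ ⟹ $\pi(\langle v\rangle,\langle v\rangle):=(\top,\langle v\rangle)$. CowD: $\pi(a\langle j\triangleleft u\rangle,\langle v\rangle)\ne()$, $\pi(a,\langle v\rangle)=()$, $\mathcal I\models\exists i{:}\sigma.\bigwedge_{k\in I(a\langle j\triangleleft u\rangle,\langle v\rangle)\cup\{j\}}i\not\approx k$ ⟹ $\pi(a,\langle v\rangle):=(\top,a\langle j\triangleleft u\rangle)$. CowU: $\pi(a,\langle v\rangle)\ne()$, $\pi(a\langle j\triangleleft u\rangle,\langle v\rangle)=()$, $a\langle j\triangleleft u\rangle\in T(A)$, $\mathcal I\models\exists i{:}\sigma.\bigwedge_{k\in I(a,\langle v\rangle)\cup\{j\}}i\not\approx k$ ⟹ $\pi(a\langle j\triangleleft u\rangle,\langle v\rangle):=(\top,a)$. CEqR: $\mathcal I\models a\approx c$, $a,c\in T_{\mathcal A}(A)$, $a\approx c\in T(A)$, $\pi(a,\langle v\rangle)\ne()$, $\pi(c,\langle v\rangle)=()$ ⟹ $\pi(c,\langle v\rangle):=(a\approx c,a)$. CEqL: symmetric, $\pi(a,\langle v\rangle):=(a\approx c,c)$. CongC: $\pi(a,\langle v\rangle)\ne()$, $\pi(a,\langle w\rangle)\ne()$, $\mathcal I\models v\not\approx w$, $\mathcal I\models\exists i{:}\sigma.\bigwedge_{k\in I(a,\langle v\rangle)\cup I(a,\langle w\rangle)}i\not\approx k$ ⟹ add $\mathcal R(a,\langle v\rangle)\wedge\mathcal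 R(a,\langle w\rangle)\wedge\exists i{:}\sigma.\bigwedge_{k\in I(a,\langle v\rangle)\cup I(a,\langle w\rangle)}i\not\approx k\Rightarrow v\approx w$, reset. Conflict rules: CongR, DisEq, Roc, CongC. A derivation is a sequence of configurations starting from an initial configuration, each obtained from the previous by a rule application. *)

theory Defs
  imports Main
begin

text \<open>Index terms are index constants: named constants and the fresh constants k_{a,c}
  introduced by DisEq. Array terms are constants,
  writes a<i <| u>, or constant arrays <v>.\<close>

datatype itrm = IC string | IK atrm atrm
and etrm = EC string | Rd atrm itrm
and atrm = AC string | Wr atrm itrm etrm | K etrm

datatype trm = TI itrm | TE etrm | TA atrm

text \<open>Formulas. ExAvoid S denotes the formula  EX i:sigma. AND_{k in S} i ~= k
  (the only quantified formulas used by the calculus).\<close>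

datatype fm = FTrue | FFalse
  | EqI itrm itrm | EqE etrm etrm | EqA atrm atrm
  | FNot fm | FAnd fm fm | FOr fm fm | FImp fm fm
  | ExAvoid "itrm set"

record ('i,'e,'a) interp =
  iconst :: "string \<Rightarrow> 'i"
  kconst :: "atrm \<Rightarrow> atrm \<Rightarrow> 'i"
  econst :: "string \<Rightarrow> 'e"
  aconst :: "string \<Rightarrow> 'a"
  rdf :: "'a \<Rightarrow> 'i \<Rightarrow> 'e"
  wrf :: "'a \<Rightarrow> 'i \<Rightarrow> 'e \<Rightarrow> 'a"
  kf :: "'e \<Rightarrow> 'a"

primrec evI :: "('i,'e,'a,'z) interp_scheme \<Rightarrow> itrm \<Rightarrow> 'i"
  and evE :: "('i,'e,'a,'z) interp_scheme \<Rightarrow> etrm \<Rightarrow> 'e"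
  and evA :: "('i,'e,'a,'z) interp_scheme \<Rightarrow> atrm \<Rightarrow> 'a" where
  "evI M (IC x) = iconst M x"
| "evI M (IK a c) = kconst M a c"
| "evE M (EC x) = econst M x"
| "evE M (Rd a i) = rdf M (evA M a) (evI M i)"
| "evA M (AC x) = aconst M x"
| "evA M (Wr a i u) = wrf M (evA M a) (evI M i) (evE M u)"
| "evA M (K v) = kf M (evE M v)"

primrec sat :: "('i,'e,'a,'z) interp_scheme \<Rightarrow> fm \<Rightarrow> bool" where
  "sat M FTrue = True"
| "sat M FFalse = False"
| "sat M (EqI s t) = (evI M s = evI M t)"
| "sat M (EqE s t) = (evE M s = evE M t)"
| "sat M (EqA s t) = (evA M s = evA M t)"
| "sat M (FNot \<phi>) = (\<not> sat M \<phi>)"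
| "sat M (FAnd \<phi> \<psi>) = (sat M \<phi> \<and> sat M \<psi>)"
| "sat M (FOr \<phi> \<psi>) = (sat M \<phi> \<or> sat M \<psi>)"
| "sat M (FImp \<phi> \<psi>) = (sat M \<phi> \<longrightarrow> sat M \<psi>)"
| "sat M (ExAvoid S) = (\<exists>d. \<forall>k\<in>S. d \<noteq> evI M k)"

text \<open>Models of the theory of extensional constant arrays (axioms row-eq, row-ne, ext, roc).
  Interpretations of the empty theory are arbitrary interpretations.\<close>

definition ext_const_array_model :: "('i,'e,'a) interp \<Rightarrow> bool" where
  "ext_const_array_model M \<longleftrightarrow>
     (\<forall>a i j u. i = j \<longrightarrow> rdf M (wrf M a i u) j = u)
   \<and> (\<forall>a i j u. i \<noteq> j \<longrightarrow> rdf M (wrf M a i u) j = rdf M a j)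
   \<and> (\<forall>a b. a = b \<longleftrightarrow> (\<forall>i. rdf M a i = rdf M b i))
   \<and> (\<forall>i v. rdf M (kf M v) i = v)"

primrec subI :: "itrm \<Rightarrow> trm set"
  and subE :: "etrm \<Rightarrow> trm set"
  and subA :: "atrm \<Rightarrow> trm set" where
  "subI (IC x) = {TI (IC x)}"
| "subI (IK a c) = {TI (IK a c)}"
| "subE (EC x) = {TE (EC x)}"
| "subE (Rd a i) = {TE (Rd a i)} \<union> subA a \<union> subI i"
| "subA (AC x) = {TA (AC x)}"
| "subA (Wr a i u) = {TA (Wr a i u)} \<union> subA a \<union> subI i \<union> subE u"
| "subA (K v) = {TA (K v)} \<union> subE v"

primrec trms :: "fm \<Rightarrow> trm set" where
  "trms FTrue = {}"
| "trms FFalse = {}"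
| "trms (EqI s t) = subI s \<union> subI t"
| "trms (EqE s t) = subE s \<union> subE t"
| "trms (EqA s t) = subA s \<union> subA t"
| "trms (FNot \<phi>) = trms \<phi>"
| "trms (FAnd \<phi> \<psi>) = trms \<phi> \<union> trms \<psi>"
| "trms (FOr \<phi> \<psi>) = trms \<phi> \<union> trms \<psi>"
| "trms (FImp \<phi> \<psi>) = trms \<phi> \<union> trms \<psi>"
| "trms (ExAvoid S) = (\<Union>k\<in>S. subI k)"

primrec atms :: "fm \<Rightarrow> fm set" where
  "atms FTrue = {}"
| "atms FFalse = {}"
| "atms (EqI s t) = {EqI s t}"
| "atms (EqE s t) = {EqE s t}"
| "atms (EqA s t) = {EqA s t}"
| "atms (FNot \<phi>) = atms \<phi>"
| "atms (FAnd \<phi> \<psi>) = atms \<phi> \<union> atms \<psi>"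
| "atms (FOr \<phi> \<psi>) = atms \<phi> \<union> atms \<psi>"
| "atms (FImp \<phi> \<psi>) = atms \<phi> \<union> atms \<psi>"
| "atms (ExAvoid S) = {}"

definition T :: "fm set \<Rightarrow> trm set" where
  "T A = (\<Union>\<phi>\<in>A. trms \<phi>)"

definition W :: "fm set \<Rightarrow> fm set" where
  "W A = {EqE (Rd (Wr a i u) i) u | a i u. TA (Wr a i u) \<in> T A}"

fun is_const_e :: "etrm \<Rightarrow> bool" where
  "is_const_e (EC _) = True" | "is_const_e _ = False"

fun is_const_a :: "atrm \<Rightarrow> bool" where
  "is_const_a (AC _) = True" | "is_const_a _ = False"

fun flatE :: "etrm \<Rightarrow> bool" where
  "flatE (EC _) = True"
| "flatE (Rd a i) = is_const_a a"

fun flatA :: "atrm \<Rightarrow> bool" where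
  "flatA (AC _) = True"
| "flatA (Wr a i u) = (is_const_a a \<and> is_const_e u)"
| "flatA (K v) = is_const_e v"

primrec flat_fm :: "fm \<Rightarrow> bool" where
  "flat_fm FTrue = True"
| "flat_fm FFalse = True"
| "flat_fm (EqI s t) = True"
| "flat_fm (EqE s t) = (flatE s \<and> flatE t)"
| "flat_fm (EqA s t) = (flatA s \<and> flatA t)"
| "flat_fm (FNot \<phi>) = flat_fm \<phi>"
| "flat_fm (FAnd \<phi> \<psi>) = (flat_fm \<phi> \<and> flat_fm \<psi>)"
| "flat_fm (FOr \<phi> \<psi>) = (flat_fm \<phi> \<and> flat_fm \<psi>)"
| "flat_fm (FImp \<phi> \<psi>) = (flat_fm \<phi> \<and> flat_fm \<psi>)"
| "flat_fm (ExAvoid S) = True"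

type_synonym pimap = "atrm \<times> trm \<Rightarrow> (fm \<times> atrm) option"

datatype ('i,'e,'a) config = Unsat | Cfg "fm set" "('i,'e,'a) interp option" pimap

definition pi0 :: pimap where "pi0 = (\<lambda>_. None)"

definition init_config :: "fm set \<Rightarrow> ('i,'e,'a) config" where
  "init_config A = Cfg A None pi0"

text \<open>I |= phi, requiring I ~= I_0.\<close>
definition holds :: "('i,'e,'a) interp option \<Rightarrow> fm \<Rightarrow> bool" where
  "holds I \<phi> = (case I of None \<Rightarrow> False | Some M \<Rightarrow> sat M \<phi>)"

text \<open>Reasons R(a,t), as a relation (reason pi a t r  iff  R(a,t) = r, R(a,t) ~= ()).\<close>
inductive reason :: "pimap \<Rightarrow> atrm \<Rightarrow> trm \<Rightarrow> fm \<Rightarrow> bool" for \<pi> where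
  base: "\<pi> (a, t) \<noteq> None \<Longrightarrow> t = TA a \<or> (\<exists>i. t = TE (Rd a i)) \<Longrightarrow> reason \<pi> a t FTrue"
| step: "\<pi> (a, t) = Some (r, c) \<Longrightarrow> \<not> (t = TA a \<or> (\<exists>i. t = TE (Rd a i)))
         \<Longrightarrow> reason \<pi> c t r' \<Longrightarrow> reason \<pi> a t (FAnd r' r)"

text \<open>Updated indices I(a,<v>), as a relation (updidx pi a v S  iff  I(a,<v>) = S ~= ()).\<close>
inductive updidx :: "pimap \<Rightarrow> atrm \<Rightarrow> etrm \<Rightarrow> itrm set \<Rightarrow> bool" for \<pi> where
  base: "\<pi> (a, TA (K v)) \<noteq> None \<Longrightarrow> a = K v \<Longrightarrow> updidx \<pi> a v {}"
| wr: "\<pi> (a, TA (K v)) = Some (FTrue, b) \<Longrightarrow> a \<noteq> K v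
       \<Longrightarrow> (\<exists>u. b = Wr a j u \<or> a = Wr b j u)
       \<Longrightarrow> updidx \<pi> b v S \<Longrightarrow> updidx \<pi> a v (insert j S)"
| other: "\<pi> (a, TA (K v)) = Some (r, c) \<Longrightarrow> a \<noteq> K v
       \<Longrightarrow> \<not> (r = FTrue \<and> (\<exists>j u. c = Wr a j u \<or> a = Wr c j u))
       \<Longrightarrow> updidx \<pi> c v S \<Longrightarrow> updidx \<pi> a v S"

inductive caext_step :: "('i,'e,'a) config \<Rightarrow> ('i,'e,'a) config \<Rightarrow> bool" where
  Interp: "(\<forall>\<phi>\<in>A \<union> W A. sat M \<phi>) \<Longrightarrow> caext_step (Cfg A None \<pi>) (Cfg A (Some M) \<pi>)"
| Conf: "\<not> (\<exists>M::('i,'e,'a) interp. \<forall>\<phi>\<in>A \<union> W A. sat M \<phi>)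
         \<Longrightarrow> caext_step (Cfg A I \<pi>) Unsat"
| InitR: "TE (Rd a i) \<in> T A
         \<Longrightarrow> caext_step (Cfg A I \<pi>) (Cfg A I (\<pi>((a, TE (Rd a i)) := Some (FTrue, a))))"
| InitW: "s = Wr a i u \<Longrightarrow> TA s \<in> T A
         \<Longrightarrow> caext_step (Cfg A I \<pi>) (Cfg A I (\<pi>((s, TE (Rd s i)) := Some (FTrue, s))))"
| RowD: "holds I (FNot (EqI i j)) \<Longrightarrow> \<pi> (Wr a j u, TE (Rd b i)) \<noteq> None
         \<Longrightarrow> \<pi> (a, TE (Rd b i)) = None
         \<Longrightarrow> caext_step (Cfg A I \<pi>)
               (Cfg A I (\<pi>((a, TE (Rd b i)) := Some (FNot (EqI i j), Wr a j u))))"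
| RowU: "holds I (FNot (EqI i j)) \<Longrightarrow> TA (Wr a j u) \<in> T A
         \<Longrightarrow> \<pi> (a, TE (Rd b i)) \<noteq> None \<Longrightarrow> \<pi> (Wr a j u, TE (Rd b i)) = None
         \<Longrightarrow> caext_step (Cfg A I \<pi>)
               (Cfg A I (\<pi>((Wr a j u, TE (Rd b i)) := Some (FNot (EqI i j), a))))"
| EqR: "holds I (EqA a c) \<Longrightarrow> TA a \<in> T A \<Longrightarrow> TA c \<in> T A
         \<Longrightarrow> EqA a c \<in> (\<Union>\<phi>\<in>A. atms \<phi>)
         \<Longrightarrow> \<pi> (a, TE (Rd b i)) \<noteq> None \<Longrightarrow> \<pi> (c, TE (Rd b i)) = None
         \<Longrightarrow> caext_step (Cfg A I \<pi>) (Cfg A I (\<pi>((c, TE (Rd b i)) := Some (EqA a c, a))))"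
| EqL: "holds I (EqA a c) \<Longrightarrow> TA a \<in> T A \<Longrightarrow> TA c \<in> T A
         \<Longrightarrow> EqA a c \<in> (\<Union>\<phi>\<in>A. atms \<phi>)
         \<Longrightarrow> \<pi> (c, TE (Rd b i)) \<noteq> None \<Longrightarrow> \<pi> (a, TE (Rd b i)) = None
         \<Longrightarrow> caext_step (Cfg A I \<pi>) (Cfg A I (\<pi>((a, TE (Rd b i)) := Some (EqA a c, c))))"
| CongR: "holds I (EqI i k) \<Longrightarrow> \<pi> (a, TE (Rd b i)) \<noteq> None \<Longrightarrow> \<pi> (a, TE (Rd c k)) \<noteq> None
         \<Longrightarrow> holds I (FNot (EqE (Rd b i) (Rd c k)))
         \<Longrightarrow> reason \<pi> a (TE (Rd b i)) r1 \<Longrightarrow> reason \<pi> a (TE (Rd c k)) r2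
         \<Longrightarrow> caext_step (Cfg A I \<pi>)
               (Cfg (insert (FImp (FAnd (FAnd r1 r2) (EqI i k)) (EqE (Rd b i) (Rd c k))) A)
                    None pi0)"
| DisEq: "holds I (FNot (EqA a c)) \<Longrightarrow> TA a \<in> T A \<Longrightarrow> TA c \<in> T A
         \<Longrightarrow> EqA a c \<in> (\<Union>\<phi>\<in>A. atms \<phi>)
         \<Longrightarrow> TI (IK a c) \<notin> T A \<Longrightarrow> TI (IK c a) \<notin> T A
         \<Longrightarrow> caext_step (Cfg A I \<pi>)
               (Cfg (insert (FImp (FNot (EqA a c))
                                  (FNot (EqE (Rd a (IK a c)) (Rd c (IK a c))))) A)
                    None pi0)"
| Roc: "\<pi> (K v, TE (Rd b i)) \<noteq> None \<Longrightarrow> holds I (FNot (EqE (Rd b i) v))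
         \<Longrightarrow> reason \<pi> (K v) (TE (Rd b i)) r
         \<Longrightarrow> caext_step (Cfg A I \<pi>) (Cfg (insert (FImp r (EqE (Rd b i) v)) A) None pi0)"
| InitC: "TA (K v) \<in> T A
         \<Longrightarrow> caext_step (Cfg A I \<pi>) (Cfg A I (\<pi>((K v, TA (K v)) := Some (FTrue, K v))))"
| CowD: "\<pi> (Wr a j u, TA (K v)) \<noteq> None \<Longrightarrow> \<pi> (a, TA (K v)) = None
         \<Longrightarrow> updidx \<pi> (Wr a j u) v S \<Longrightarrow> holds I (ExAvoid (insert j S))
         \<Longrightarrow> caext_step (Cfg A I \<pi>) (Cfg A I (\<pi>((a, TA (K v)) := Some (FTrue, Wr a j u))))"
| CowU: "\<pi> (a, TA (K v)) \<noteq> None \<Longrightarrow> \<pi> (Wr a j u, TA (K v)) = None \<Longrightarrow> TA (Wr a j u) \<in> T A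
         \<Longrightarrow> updidx \<pi> a v S \<Longrightarrow> holds I (ExAvoid (insert j S))
         \<Longrightarrow> caext_step (Cfg A I \<pi>) (Cfg A I (\<pi>((Wr a j u, TA (K v)) := Some (FTrue, a))))"
| CEqR: "holds I (EqA a c) \<Longrightarrow> TA a \<in> T A \<Longrightarrow> TA c \<in> T A
         \<Longrightarrow> EqA a c \<in> (\<Union>\<phi>\<in>A. atms \<phi>)
         \<Longrightarrow> \<pi> (a, TA (K v)) \<noteq> None \<Longrightarrow> \<pi> (c, TA (K v)) = None
         \<Longrightarrow> caext_step (Cfg A I \<pi>) (Cfg A I (\<pi>((c, TA (K v)) := Some (EqA a c, a))))"
| CEqL: "holds I (EqA a c) \<Longrightarrow> TA a \<in> T A \<Longrightarrow> TA c \<in> T A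
         \<Longrightarrow> EqA a c \<in> (\<Union>\<phi>\<in>A. atms \<phi>)
         \<Longrightarrow> \<pi> (c, TA (K v)) \<noteq> None \<Longrightarrow> \<pi> (a, TA (K v)) = None
         \<Longrightarrow> caext_step (Cfg A I \<pi>) (Cfg A I (\<pi>((a, TA (K v)) := Some (EqA a c, c))))"
| CongC: "\<pi> (a, TA (K v)) \<noteq> None \<Longrightarrow> \<pi> (a, TA (K w)) \<noteq> None
         \<Longrightarrow> holds I (FNot (EqE v w))
         \<Longrightarrow> updidx \<pi> a v S1 \<Longrightarrow> updidx \<pi> a w S2
         \<Longrightarrow> holds I (ExAvoid (S1 \<union> S2))
         \<Longrightarrow> reason \<pi> a (TA (K v)) r1 \<Longrightarrow> reason \<pi> a (TA (K w)) r2
         \<Longrightarrow> caext_step (Cfg A I \<pi>)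
               (Cfg (insert (FImp (FAnd (FAnd r1 r2) (ExAvoid (S1 \<union> S2))) (EqE v w)) A)
                    None pi0)"

definition caext_derivation_ends_in :: "('i,'e,'a) config \<Rightarrow> bool" where
  "caext_derivation_ends_in C \<longleftrightarrow>
     (\<exists>A0. (\<forall>\<phi>\<in>A0. flat_fm \<phi>) \<and> caext_step\<^sup>*\<^sup>* (init_config A0) C)"

text \<open>Validity in the theory of extensional constant arrays of
  R => ALL i:sigma. (OR_{k in S} i = k) | a[i] = v,  written out semantically.\<close>
definition valid_cow_invariant ::
  "('i \<times> 'e \<times> 'a) itself \<Rightarrow> fm \<Rightarrow> itrm set \<Rightarrow> atrm \<Rightarrow> etrm \<Rightarrow> bool" where
  "valid_cow_invariant _ r S a v \<longleftrightarrow>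
     (\<forall>M::('i,'e,'a) interp. ext_const_array_model M \<longrightarrow> sat M r \<longrightarrow>
        (\<forall>i. (\<exists>k\<in>S. i = evI M k) \<or> rdf M (evA M a) i = evE M v))"

end

theory Submission
  imports Defs
begin

definition Pinv :: "pimap \<Rightarrow> bool" where
  "Pinv \<pi> \<longleftrightarrow> (\<forall>x w r c. \<pi> (x, TA (K w)) = Some (r, c) \<longrightarrow>
     x = K w \<or> (r = FTrue \<and> (\<exists>j u. c = Wr x j u \<or> x = Wr c j u)) \<or> r = EqA x c \<or> r = EqA c x)"

definition Qinv :: "pimap \<Rightarrow> bool" where
  "Qinv \<pi> \<longleftrightarrow> (\<forall>x w. \<pi> (x, TA (K w)) \<noteq> None \<longrightarrow>
     (\<exists>r. reason \<pi> x (TA (K w)) r) \<and> (\<exists>S. updidx \<pi> x w S))"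

definition Inv :: "('i,'e,'a) config \<Rightarrow> bool" where
  "Inv C = (case C of Unsat \<Rightarrow> True | Cfg A I \<pi> \<Rightarrow> Pinv \<pi> \<and> Qinv \<pi>)"

lemma reason_mono:
  assumes "reason \<pi> a t r"
    and "\<forall>b. \<pi> (b,t) \<noteq> None \<longrightarrow> \<pi>' (b,t) \<noteq> None"
    and "\<forall>b y. \<pi> (b,t) = Some y \<longrightarrow> \<not> (t = TA b \<or> (\<exists>i. t = TE (Rd b i))) \<longrightarrow> \<pi>' (b,t) = Some y"
  shows "reason \<pi>' a t r"
  using assms
proof (induction rule: reason.induct)
  case (base a)
  then show ?case by (auto intro: reason.base)
next
  case (step a r c r')
  then show ?case by (auto intro: reason.step)
qed

lemma updidx_mono:
  assumes "updidx \<pi> a v S"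
    and "\<forall>b. \<pi> (b,TA (K v)) \<noteq> None \<longrightarrow> \<pi>' (b,TA (K v)) \<noteq> None"
    and "\<forall>b y. \<pi> (b,TA (K v)) = Some y \<longrightarrow> b \<noteq> K v \<longrightarrow> \<pi>' (b,TA (K v)) = Some y"
  shows "updidx \<pi>' a v S"
  using assms
proof (induction rule: updidx.induct)
  case (base a)
  then show ?case by (auto intro: updidx.base)
next
  case (wr a b j S)
  then show ?case by (auto intro: updidx.wr)
next
  case (other a r c S)
  then show ?case using updidx.other by blast
qed

lemma Qinv_same:
  assumes "Qinv \<pi>" "\<forall>b w. \<pi>' (b, TA (K w)) = \<pi> (b, TA (K w))"
  shows "Qinv \<pi>'"
  unfolding Qinv_def
proof (intro allI impI)
  fix x w assume h: "\<pi>' (x, TA (K w)) \<noteq> None"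
  then have "\<pi> (x, TA (K w)) \<noteq> None" using assms(2) by simp
  then obtain r S where "reason \<pi> x (TA (K w)) r" "updidx \<pi> x w S"
    using assms(1) unfolding Qinv_def by blast
  then show "(\<exists>r. reason \<pi>' x (TA (K w)) r) \<and> (\<exists>S. updidx \<pi>' x w S)"
    using reason_mono[of \<pi> x "TA (K w)" r \<pi>'] updidx_mono[of \<pi> x w S \<pi>'] assms(2) by auto
qed

lemma Pinv_same:
  assumes "Pinv \<pi>" "\<forall>b w. \<pi>' (b, TA (K w)) = \<pi> (b, TA (K w))"
  shows "Pinv \<pi>'"
  using assms unfolding Pinv_def by metis

lemma Qinv_extend:
  assumes Q: "Qinv \<pi>" and none: "\<pi> (x, TA (K w)) = None"
    and c: "\<pi> (c, TA (K w)) \<noteq> None"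
    and p': "\<pi>' = \<pi>((x, TA (K w)) := Some (r0, c))"
  shows "Qinv \<pi>'"
proof -
  have m1: "\<forall>b. \<pi> (b,TA (K w')) \<noteq> None \<longrightarrow> \<pi>' (b,TA (K w')) \<noteq> None" for w'
    using p' by auto
  have m2: "\<forall>b y. \<pi> (b,TA (K w')) = Some y \<longrightarrow> \<pi>' (b,TA (K w')) = Some y" for w'
    using p' none by auto
  have lr: "reason \<pi>' b (TA (K w')) r" if "reason \<pi> b (TA (K w')) r" for b w' r
    using reason_mono[OF that] m1 m2 by blast
  have lu: "updidx \<pi>' b w' S" if "updidx \<pi> b w' S" for b w' S
    using updidx_mono[OF that] m1 m2 by blast
  show ?thesis unfolding Qinv_def
  proof (intro allI impI)
    fix y z assume h: "\<pi>' (y, TA (K z)) \<noteq> None"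
    show "(\<exists>r. reason \<pi>' y (TA (K z)) r) \<and> (\<exists>S. updidx \<pi>' y z S)"
    proof (cases "(y, z) = (x, w)")
      case False
      then have "\<pi> (y, TA (K z)) \<noteq> None" using h p' by auto
      then show ?thesis using Q lr lu unfolding Qinv_def by blast
    next
      case True
      then have yx: "y = x" "z = w" by auto
      obtain rc Sc where rc: "reason \<pi>' c (TA (K w)) rc" and Sc: "updidx \<pi>' c w Sc"
        using Q c lr lu unfolding Qinv_def by blast
      have px: "\<pi>' (x, TA (K w)) = Some (r0, c)" using p' by simp
      show ?thesis
      proof (cases "x = K w")
        case True
        then show ?thesis using yx px by (auto intro: reason.base updidx.base)
      next
        case xne: False
        have "reason \<pi>' x (TA (K w)) (FAnd rc r0)"
          by (rule reason.step[OF px _ rc]) (use xne in auto)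
        moreover have "\<exists>S. updidx \<pi>' x w S"
        proof (cases "r0 = FTrue \<and> (\<exists>j u. c = Wr x j u \<or> x = Wr c j u)")
          case True
          then obtain j u where "c = Wr x j u \<or> x = Wr c j u" by blast
          then have "updidx \<pi>' x w (insert j Sc)"
            using True px xne Sc by (intro updidx.wr[of _ _ _ c]) auto
          then show ?thesis by blast
        next
          case False
          then show ?thesis using updidx.other[OF _ xne False Sc] px by auto
        qed
        ultimately show ?thesis using yx by blast
      qed
    qed
  qed
qed

lemma Qinv_initC:
  assumes Q: "Qinv \<pi>"
    and p': "\<pi>' = \<pi>((K w, TA (K w)) := Some y)"
  shows "Qinv \<pi>'"
proof -
  have m1: "\<forall>b. \<pi> (b,TA (K w')) \<noteq> None \<longrightarrow> \<pi>' (b,TA (K w')) \<noteq> None" for w'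
    using p' by auto
  have m2: "\<forall>b y. \<pi> (b,TA (K w')) = Some y \<longrightarrow> b \<noteq> K w' \<longrightarrow> \<pi>' (b,TA (K w')) = Some y" for w'
    using p' by auto
  have m2': "\<forall>b y. \<pi> (b,TA (K w')) = Some y \<longrightarrow> \<not> (TA (K w') = TA b \<or> (\<exists>i. TA (K w') = TE (Rd b i))) \<longrightarrow> \<pi>' (b,TA (K w')) = Some y" for w'
    using p' by auto
  have lr: "reason \<pi>' b (TA (K w')) r" if "reason \<pi> b (TA (K w')) r" for b w' r
    using reason_mono[OF that m1 m2'] .
  have lu: "updidx \<pi>' b w' S" if "updidx \<pi> b w' S" for b w' S
    using updidx_mono[OF that m1 m2] .
  show ?thesis unfolding Qinv_def
  proof (intro allI impI)
    fix y' z assume h: "\<pi>' (y', TA (K z)) \<noteq> None"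
    show "(\<exists>r. reason \<pi>' y' (TA (K z)) r) \<and> (\<exists>S. updidx \<pi>' y' z S)"
    proof (cases "(y', z) = (K w, w)")
      case False
      then have "\<pi> (y', TA (K z)) \<noteq> None" using h p' by auto
      then show ?thesis using Q lr lu unfolding Qinv_def by blast
    next
      case True
      then show ?thesis using h by (auto intro: reason.base updidx.base)
    qed
  qed
qed

lemma Inv_TE:
  assumes "Pinv \<pi> \<and> Qinv \<pi>"
  shows "Pinv (\<pi>((b, TE e) := y)) \<and> Qinv (\<pi>((b, TE e) := y))"
proof -
  have e: "\<forall>b' w. (\<pi>((b, TE e) := y)) (b', TA (K w)) = \<pi> (b', TA (K w))" by simp
  show ?thesis using Pinv_same[OF _ e] Qinv_same[OF _ e] assms by blast
qed

lemma step_Inv: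
  assumes "caext_step C C'" "Inv C"
  shows "Inv C'"
  using assms
proof (induction rule: caext_step.induct)
  case (Interp A M \<pi>)
  then show ?case by (simp add: Inv_def)
next
  case (Conf A I \<pi>)
  then show ?case by (simp add: Inv_def)
next
  case (InitR a i A I \<pi>)
  then show ?case unfolding Inv_def using Inv_TE by simp
next
  case (InitW s a i u A I \<pi>)
  then show ?case unfolding Inv_def using Inv_TE by simp
next
  case (RowD I i j \<pi> a u b A)
  then show ?case unfolding Inv_def using Inv_TE by simp
next
  case (RowU I i j a u A \<pi> b)
  then show ?case unfolding Inv_def using Inv_TE by simp
next
  case (EqR I a c A \<pi> b i)
  then show ?case unfolding Inv_def using Inv_TE by simp
next
  case (EqL I a c A \<pi> b i)
  then show ?case unfolding Inv_def using Inv_TE by simp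
next
  case (CongR I i k \<pi> a b c r1 r2 A)
  then show ?case by (simp add: Inv_def Pinv_def Qinv_def pi0_def)
next
  case (DisEq I a c A \<pi>)
  then show ?case by (simp add: Inv_def Pinv_def Qinv_def pi0_def)
next
  case (Roc \<pi> v b i I r A)
  then show ?case by (simp add: Inv_def Pinv_def Qinv_def pi0_def)
next
  case (InitC v A I \<pi>)
  then show ?case unfolding Inv_def
    using Qinv_initC[of \<pi>] by (auto simp: Pinv_def)
next
  case (CowD \<pi> a j u v S I A)
  then show ?case unfolding Inv_def
    using Qinv_extend[of \<pi> a v "Wr a j u"] by (auto simp: Pinv_def)
next
  case (CowU \<pi> a v j u A S I)
  then show ?case unfolding Inv_def
    using Qinv_extend[of \<pi> "Wr a j u" v a] by (auto simp: Pinv_def)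
next
  case (CEqR I a c A \<pi> v)
  then show ?case unfolding Inv_def
    using Qinv_extend[of \<pi> c v a] by (auto simp: Pinv_def)
next
  case (CEqL I a c A \<pi> v)
  then show ?case unfolding Inv_def
    using Qinv_extend[of \<pi> a v c] by (auto simp: Pinv_def)
next
  case (CongC \<pi> a v w I S1 S2 r1 r2 A)
  then show ?case by (simp add: Inv_def Pinv_def Qinv_def pi0_def)
qed

lemma steps_Inv:
  assumes "caext_step\<^sup>*\<^sup>* C C'" "Inv C"
  shows "Inv C'"
  using assms by (induction rule: rtranclp_induct) (auto intro: step_Inv)

lemma valid_lemma:
  assumes P: "Pinv \<pi>" and u: "updidx \<pi> a v S"
  shows "\<forall>r. reason \<pi> a (TA (K v)) r \<longrightarrow> valid_cow_invariant TYPE('j \<times> 'f \<times> 'b) r S a v"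
  using u
proof (induction rule: updidx.induct)
  case (base a v)
  show ?case
  proof (intro allI impI)
    fix r assume "reason \<pi> a (TA (K v)) r"
    show "valid_cow_invariant TYPE('j \<times> 'f \<times> 'b) r {} a v"
      unfolding valid_cow_invariant_def ext_const_array_model_def using base by simp
  qed
next
  case (wr a v b j S)
  show ?case
  proof (intro allI impI)
    fix r assume "reason \<pi> a (TA (K v)) r"
    then obtain r' where r: "r = FAnd r' FTrue" and rb: "reason \<pi> b (TA (K v)) r'"
      using wr.hyps(1,2) by (cases rule: reason.cases) auto
    have ih: "valid_cow_invariant TYPE('j \<times> 'f \<times> 'b) r' S b v" using wr.IH rb by blast
    obtain u where bu: "b = Wr a j u \<or> a = Wr b j u" using wr.hyps(3) by blast
    show "valid_cow_invariant TYPE('j \<times> 'f \<times> 'b) r (insert j S) a v"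
      unfolding valid_cow_invariant_def
    proof (intro allI impI)
      fix M :: "('j,'f,'b) interp" and i
      assume M: "ext_const_array_model M" and s: "sat M r"
      have h: "(\<exists>k\<in>S. i = evI M k) \<or> rdf M (evA M b) i = evE M v"
        using ih M s r unfolding valid_cow_invariant_def by auto
      show "(\<exists>k\<in>insert j S. i = evI M k) \<or> rdf M (evA M a) i = evE M v"
      proof (cases "i = evI M j")
        case True then show ?thesis by auto
      next
        case False
        then have "rdf M (evA M a) i = rdf M (evA M b) i"
          using bu M unfolding ext_const_array_model_def by auto
        then show ?thesis using h by auto
      qed
    qed
  qed
next
  case (other a v r0 c S)
  show ?case
  proof (intro allI impI)
    fix r assume "reason \<pi> a (TA (K v)) r"
    then obtain r' where r: "r = FAnd r' r0" and rb: "reason \<pi> c (TA (K v)) r'"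
      using other.hyps(1,2) by (cases rule: reason.cases) auto
    have ih: "valid_cow_invariant TYPE('j \<times> 'f \<times> 'b) r' S c v" using other.IH rb by blast
    have r0: "r0 = EqA a c \<or> r0 = EqA c a"
      using P other.hyps(1,2,3) unfolding Pinv_def by blast
    show "valid_cow_invariant TYPE('j \<times> 'f \<times> 'b) r S a v"
      unfolding valid_cow_invariant_def
    proof (intro allI impI)
      fix M :: "('j,'f,'b) interp" and i
      assume M: "ext_const_array_model M" and s: "sat M r"
      have "evA M a = evA M c" using s r r0 by auto
      moreover have "(\<exists>k\<in>S. i = evI M k) \<or> rdf M (evA M c) i = evE M v"
        using ih M s r unfolding valid_cow_invariant_def by auto
      ultimately show "(\<exists>k\<in>S. i = evI M k) \<or> rdf M (evA M a) i = evE M v" by simp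
    qed
  qed
qed

theorem mainTheorem6:
  fixes C :: "('i,'e,'a) config" and A :: "fm set" and I :: "('i,'e,'a) interp option"
    and \<pi> :: pimap and a :: atrm and v :: etrm
  assumes "caext_derivation_ends_in C"
    and "C = Cfg A I \<pi>"
    and "\<pi> (a, TA (K v)) \<noteq> None"
  shows "(\<exists>r S. reason \<pi> a (TA (K v)) r \<and> updidx \<pi> a v S)
       \<and> (\<forall>r S. reason \<pi> a (TA (K v)) r \<longrightarrow> updidx \<pi> a v S \<longrightarrow>
             valid_cow_invariant TYPE('j \<times> 'f \<times> 'b) r S a v)"
proof -
  obtain A0 where "caext_step\<^sup>*\<^sup>* (init_config A0) C" using assms(1)
    unfolding caext_derivation_ends_in_def by blast
  moreover have "Inv (init_config A0 :: ('i,'e,'a) config)"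
    by (simp add: Inv_def init_config_def Pinv_def Qinv_def pi0_def)
  ultimately have "Inv C" by (rule steps_Inv)
  then have P: "Pinv \<pi>" and Q: "Qinv \<pi>" using assms(2) by (auto simp: Inv_def)
  show ?thesis using Q assms(3) valid_lemma[OF P] unfolding Qinv_def by blast
qed

end
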